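(* Let $\mathcal E$ be an exchangeability system for a noncommutative probability space $(\mathcal A,\phi)$, let $X_1,\dots,X_n\in\mathcal A$, and for $i=1,\dots,m$ let $Y_i=\sum_{j=1}^n\alpha_{ij}X_j+\beta_i1$ with $\alpha_{ij},\beta_i\in\mathbb C$. If $m\ge2$, then $$K_m(Y_1,\dots,Y_m)=\sum_{j_1,\dots,j_m=1}^n\alpha_{1,j_1}\cdots\alpha_{m,j_m}K_m(X_{j_1},\dots,X_{j_m});$$ in particular it does not depend on the $\beta_i$. Likewise, for every $\pi\in\Pi_m$ having no singleton block, $K_\pi(Y_1,\dots,Y_m)=\sum_{j_1,\dots,j_m}\alpha_{1,j_1}\cdots\alpha_{m,j_m}K_\pi(X_{j_1},\dots,X_{j_m})$.
   Context: A noncommutative probability space is a pair $(\mathcal A,\phi)$ of a complex unital algebra $\mathcal A$ and a unital linear functional $\phi$. An exchangeability system $\mathcal E$ for $(\mathcal A,\phi)$ consists of a noncommutative probability space $(\mathcal U,\tilde\phi)$ and a family $(\iota_k)_{k\in\mathbb N}$ of embeddings (injective unital algebra homomorphisms) $\iota_k:\mathcal A\to\mathcal A_k\subseteq\mathcal U$ with $\tilde\phi\circ\iota_k=\phi$; write $X^{(k)}=\iota_k(X)$. It is required that for all $X_1,\dots,X_n\in\mathcal A$, all indices $i_1,\dots,i_n\in\mathbb N$ and every bijection $\sigma$ of $\mathbb N$, $\tilde\phi(X_1^{(i_1)}\cdots X_n^{(i_n)})=\tilde\phi(X_1^{(\sigma(i_1))}\cdots X_n^{(\sigma(i_n))})$;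 this value depends only on the kernel of $j\mapsto i_j$ and for a partition $\sigma$ of $[n]$ is denoted $\phi_\sigma(X_1,\dots,X_n)$. For a primitive $m$-th root of unity $\omega$, $K_m(Y_1,\dots,Y_m)=\frac1m\tilde\phi(Y_1^\omega\cdots Y_m^\omega)$ with $Y^\omega=\sum_{k=1}^m\omega^kY^{(k)}$. $\Pi_m$ is the lattice of set partitions of $[m]$ under refinement with Möbius function $\mu$, and $K_\pi(Y_1,\dots,Y_m)=\sum_{\sigma\le\pi}\phi_\sigma(Y_1,\dots,Y_m)\mu(\sigma,\pi)$. *)

theory Defs
  imports Complex_Main "HOL-Library.Disjoint_Sets" "HOL-Library.FuncSet"
begin

class complex_algebra_1 = ring_1 +
  fixes scaleC :: "complex \<Rightarrow> 'a \<Rightarrow> 'a" (infixr \<open>*\<^sub>C\<close> 75)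
  assumes scaleC_add_right: "scaleC a (x + y) = scaleC a x + scaleC a y"
    and scaleC_add_left: "scaleC (a + b) x = scaleC a x + scaleC b x"
    and scaleC_scaleC: "scaleC a (scaleC b x) = scaleC (a * b) x"
    and scaleC_one: "scaleC 1 x = x"
    and mult_scaleC_left: "scaleC a x * y = scaleC a (x * y)"
    and mult_scaleC_right: "x * scaleC a y = scaleC a (x * y)"

definition ncps :: "('a::complex_algebra_1 \<Rightarrow> complex) \<Rightarrow> bool" where
  "ncps \<phi> \<longleftrightarrow> (\<forall>x y. \<phi> (x + y) = \<phi> x + \<phi> y) \<and>
                (\<forall>c x. \<phi> (c *\<^sub>C x) = c * \<phi> x) \<and> \<phi> 1 = 1"

definition unital_alg_hom :: "('a::complex_algebra_1 \<Rightarrow> 'b::complex_algebra_1) \<Rightarrow> bool" where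
  "unital_alg_hom f \<longleftrightarrow> (\<forall>x y. f (x + y) = f x + f y) \<and> (\<forall>x y. f (x * y) = f x * f y) \<and>
                        (\<forall>c x. f (c *\<^sub>C x) = c *\<^sub>C f x) \<and> f 1 = 1"

definition oprod :: "nat \<Rightarrow> (nat \<Rightarrow> 'a::monoid_mult) \<Rightarrow> 'a" where
  "oprod n Z = prod_list (map Z [0..<n])"

definition exch_system :: "('a::complex_algebra_1 \<Rightarrow> complex) \<Rightarrow> ('u::complex_algebra_1 \<Rightarrow> complex)
    \<Rightarrow> (nat \<Rightarrow> 'a \<Rightarrow> 'u) \<Rightarrow> bool" where
  "exch_system \<phi> \<phi>t \<iota> \<longleftrightarrow> ncps \<phi> \<and> ncps \<phi>t \<and>
     (\<forall>k. inj (\<iota> k) \<and> unital_alg_hom (\<iota> k) \<and> (\<forall>x. \<phi>t (\<iota> k x) = \<phi> x)) \<and>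
     (\<forall>(n::nat) (Xs::nat \<Rightarrow> 'a) (idx::nat \<Rightarrow> nat) (\<sigma>::nat \<Rightarrow> nat). bij \<sigma> \<longrightarrow>
        \<phi>t (oprod n (\<lambda>j. \<iota> (idx j) (Xs j))) = \<phi>t (oprod n (\<lambda>j. \<iota> (\<sigma> (idx j)) (Xs j))))"

definition primitive_root :: "nat \<Rightarrow> complex \<Rightarrow> bool" where
  "primitive_root m \<omega> \<longleftrightarrow> \<omega> ^ m = 1 \<and> (\<forall>k. 0 < k \<and> k < m \<longrightarrow> \<omega> ^ k \<noteq> 1)"

definition omega_lift :: "(nat \<Rightarrow> 'a \<Rightarrow> 'u::complex_algebra_1) \<Rightarrow> nat \<Rightarrow> complex \<Rightarrow> 'a \<Rightarrow> 'u" where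
  "omega_lift \<iota> m \<omega> Y = (\<Sum>k=1..m. (\<omega> ^ k) *\<^sub>C \<iota> k Y)"

definition ncK :: "('u::complex_algebra_1 \<Rightarrow> complex) \<Rightarrow> (nat \<Rightarrow> 'a \<Rightarrow> 'u) \<Rightarrow> nat \<Rightarrow> complex
    \<Rightarrow> (nat \<Rightarrow> 'a) \<Rightarrow> complex" where
  "ncK \<phi>t \<iota> m \<omega> Y = (1 / of_nat m) * \<phi>t (oprod m (\<lambda>i. omega_lift \<iota> m \<omega> (Y i)))"

definition Pi_set :: "nat \<Rightarrow> nat set set set" where
  "Pi_set m = {p. partition_on {0..<m} p}"

definition refines :: "'a set set \<Rightarrow> 'a set set \<Rightarrow> bool" where
  "refines \<sigma> \<pi> \<longleftrightarrow> (\<forall>B\<in>\<sigma>. \<exists>C\<in>\<pi>. B \<subseteq> C)"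

text \<open>Moebius function of a finite poset \<open>(P, le)\<close>, via the standard recursion
  \<open>\<mu>(x,x) = 1\<close>, \<open>\<mu>(x,y) = - \<Sum>{\<mu>(x,z) | x \<le> z < y}\<close> for \<open>x < y\<close>, \<open>\<mu>(x,y) = 0\<close> otherwise.
  The recursion is unfolded with a fuel parameter; fuel \<open>card P\<close> exceeds the length of
  every chain, so it computes the Moebius function.\<close>
fun moeb_fuel :: "nat \<Rightarrow> 'p set \<Rightarrow> ('p \<Rightarrow> 'p \<Rightarrow> bool) \<Rightarrow> 'p \<Rightarrow> 'p \<Rightarrow> int" where
  "moeb_fuel 0 P le x y = (if x = y then 1 else 0)"
| "moeb_fuel (Suc k) P le x y =
     (if x = y then 1
      else if le x y then - (\<Sum>z\<in>{z\<in>P. le x z \<and> le z y \<and> z \<noteq> y}. moeb_fuel k P le x z)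
      else 0)"

definition moebius :: "'p set \<Rightarrow> ('p \<Rightarrow> 'p \<Rightarrow> bool) \<Rightarrow> 'p \<Rightarrow> 'p \<Rightarrow> int" where
  "moebius P le x y = moeb_fuel (card P) P le x y"

definition mu_Pi :: "nat \<Rightarrow> nat set set \<Rightarrow> nat set set \<Rightarrow> int" where
  "mu_Pi m \<sigma> \<pi> = moebius (Pi_set m) refines \<sigma> \<pi>"

text \<open>A canonical index function with kernel \<open>\<sigma>\<close>: \<open>j\<close> gets the least element of its block.\<close>
definition part_index :: "nat set set \<Rightarrow> nat \<Rightarrow> nat" where
  "part_index \<sigma> j = Min (THE B. B \<in> \<sigma> \<and> j \<in> B)"

definition phi_part :: "('u::complex_algebra_1 \<Rightarrow> complex) \<Rightarrow> (nat \<Rightarrow> 'a \<Rightarrow> 'u) \<Rightarrow> nat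
    \<Rightarrow> nat set set \<Rightarrow> (nat \<Rightarrow> 'a) \<Rightarrow> complex" where
  "phi_part \<phi>t \<iota> m \<sigma> Y = \<phi>t (oprod m (\<lambda>j. \<iota> (part_index \<sigma> j) (Y j)))"

definition ncKpi :: "('u::complex_algebra_1 \<Rightarrow> complex) \<Rightarrow> (nat \<Rightarrow> 'a \<Rightarrow> 'u) \<Rightarrow> nat
    \<Rightarrow> nat set set \<Rightarrow> (nat \<Rightarrow> 'a) \<Rightarrow> complex" where
  "ncKpi \<phi>t \<iota> m \<pi> Y =
     (\<Sum>\<sigma>\<in>{\<sigma>\<in>Pi_set m. refines \<sigma> \<pi>}. phi_part \<phi>t \<iota> m \<sigma> Y * of_int (mu_Pi m \<sigma> \<pi>))"

end

theory Submission
  imports Defs "HOL-Library.Infinite_Set"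
begin



lemma scaleC_zero_left[simp]: "(0::complex) *\<^sub>C (x::'a::complex_algebra_1) = 0"
proof -
  have "(0::complex) *\<^sub>C x = 0 *\<^sub>C x + 0 *\<^sub>C x" by (metis add_0 scaleC_add_left)
  thus ?thesis by simp
qed

lemma scaleC_zero_right[simp]: "c *\<^sub>C (0::'a::complex_algebra_1) = 0"
proof -
  have "c *\<^sub>C (0::'a) = c *\<^sub>C 0 + c *\<^sub>C 0" by (metis add_0 scaleC_add_right)
  thus ?thesis by simp
qed

lemma scaleC_sum_right: "c *\<^sub>C (\<Sum>x\<in>A. f x) = (\<Sum>x\<in>A. c *\<^sub>C (f x::'a::complex_algebra_1))"
  by (induction A rule: infinite_finite_induct) (auto simp: scaleC_add_right)

lemma scaleC_sum_left: "(\<Sum>x\<in>A. f x) *\<^sub>C (y::'a::complex_algebra_1) = (\<Sum>x\<in>A. f x *\<^sub>C y)"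
  by (induction A rule: infinite_finite_induct) (auto simp: scaleC_add_left)

lemma oprod_Suc: "oprod (Suc m) Z = oprod m Z * Z m"
  by (simp add: oprod_def)

lemma oprod_cong: "(\<And>i. i < m \<Longrightarrow> Z i = Z' i) \<Longrightarrow> oprod m Z = oprod m Z'"
  unfolding oprod_def by (intro arg_cong[where f=prod_list] map_cong) auto

lemma oprod_zero: "p < m \<Longrightarrow> Z p = (0::'a::ring_1) \<Longrightarrow> oprod m Z = 0"
proof (induction m)
  case 0 then show ?case by simp
next
  case (Suc m)
  then show ?case by (cases "p = m") (auto simp: oprod_Suc)
qed

lemma oprod_expand:
  fixes V :: "nat \<Rightarrow> nat \<Rightarrow> 'u::complex_algebra_1"
  assumes "finite C"
  shows "oprod m (\<lambda>i. \<Sum>c\<in>C. \<gamma> i c *\<^sub>C V i c) =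
    (\<Sum>j\<in>{0..<m} \<rightarrow>\<^sub>E C. (\<Prod>i<m. \<gamma> i (j i)) *\<^sub>C oprod m (\<lambda>i. V i (j i)))"
proof (induction m)
  case 0
  then show ?case by (simp add: oprod_def scaleC_one)
next
  case (Suc m)
  have "oprod (Suc m) (\<lambda>i. \<Sum>c\<in>C. \<gamma> i c *\<^sub>C V i c) =
     (\<Sum>j\<in>{0..<m} \<rightarrow>\<^sub>E C. (\<Prod>i<m. \<gamma> i (j i)) *\<^sub>C oprod m (\<lambda>i. V i (j i))) * (\<Sum>c\<in>C. \<gamma> m c *\<^sub>C V m c)"
    by (simp add: oprod_Suc Suc.IH)
  also have "\<dots> = (\<Sum>(c,j)\<in>C \<times> ({0..<m} \<rightarrow>\<^sub>E C). ((\<Prod>i<m. \<gamma> i (j i)) * \<gamma> m c) *\<^sub>C (oprod m (\<lambda>i. V i (j i)) * V m c))"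
    by (simp add: sum_distrib_left sum_distrib_right sum.cartesian_product[symmetric] 
          mult_scaleC_left mult_scaleC_right scaleC_scaleC mult.commute) (simp add: scaleC_sum_right scaleC_scaleC mult.commute)
  also have "\<dots> = (\<Sum>j\<in>{0..<Suc m} \<rightarrow>\<^sub>E C. (\<Prod>i<Suc m. \<gamma> i (j i)) *\<^sub>C oprod (Suc m) (\<lambda>i. V i (j i)))"
  proof -
    have e: "{0..<Suc m} = insert m {0..<m}" by auto
    have "(\<Sum>j\<in>{0..<Suc m} \<rightarrow>\<^sub>E C. (\<Prod>i<Suc m. \<gamma> i (j i)) *\<^sub>C oprod (Suc m) (\<lambda>i. V i (j i)))
      = (\<Sum>x\<in>C \<times> ({0..<m} \<rightarrow>\<^sub>E C). (\<lambda>j. (\<Prod>i<Suc m. \<gamma> i (j i)) *\<^sub>C oprod (Suc m) (\<lambda>i. V i (j i))) ((\<lambda>(y, g). g(m := y)) x))"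
      unfolding e PiE_insert_eq by (subst sum.reindex) (auto intro: inj_combinator)
    also have "\<dots> = (\<Sum>(c,j)\<in>C \<times> ({0..<m} \<rightarrow>\<^sub>E C). ((\<Prod>i<m. \<gamma> i (j i)) * \<gamma> m c) *\<^sub>C (oprod m (\<lambda>i. V i (j i)) * V m c))"
    proof (intro sum.cong refl, clarify)
      fix c j
      have "(\<Prod>i<Suc m. \<gamma> i ((j(m := c)) i)) = (\<Prod>i<m. \<gamma> i (j i)) * \<gamma> m c"
        by (simp add: prod.lessThan_Suc)
      moreover have "oprod m (\<lambda>i. V i ((j(m := c)) i)) = oprod m (\<lambda>i. V i (j i))"
        by (rule oprod_cong) auto
      ultimately show "(\<Prod>i<Suc m. \<gamma> i ((j(m := c)) i)) *\<^sub>C oprod (Suc m) (\<lambda>i. V i ((j(m := c)) i))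
          = ((\<Prod>i<m. \<gamma> i (j i)) * \<gamma> m c) *\<^sub>C (oprod m (\<lambda>i. V i (j i)) * V m c)"
        by (simp add: oprod_Suc)
    qed
    finally show ?thesis by simp
  qed
  finally show ?case .
qed




definition ivl :: "'p set \<Rightarrow> ('p \<Rightarrow> 'p \<Rightarrow> bool) \<Rightarrow> 'p \<Rightarrow> 'p \<Rightarrow> 'p set" where
  "ivl P le x y = {z\<in>P. le x z \<and> le z y}"

definition porder :: "'p set \<Rightarrow> ('p \<Rightarrow> 'p \<Rightarrow> bool) \<Rightarrow> bool" where
  "porder P le \<longleftrightarrow> finite P \<and> (\<forall>x\<in>P. le x x) \<and> (\<forall>x\<in>P. \<forall>y\<in>P. \<forall>z\<in>P. le x y \<longrightarrow> le y z \<longrightarrow> le x z)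
     \<and> (\<forall>x\<in>P. \<forall>y\<in>P. le x y \<longrightarrow> le y x \<longrightarrow> x = y)"

lemma porderD:
  assumes "porder P le"
  shows "finite P" "x \<in> P \<Longrightarrow> le x x"
    "x \<in> P \<Longrightarrow> y \<in> P \<Longrightarrow> z \<in> P \<Longrightarrow> le x y \<Longrightarrow> le y z \<Longrightarrow> le x z"
    "x \<in> P \<Longrightarrow> y \<in> P \<Longrightarrow> le x y \<Longrightarrow> le y x \<Longrightarrow> x = y"
  using assms unfolding porder_def by blast+

lemma porder_dual: "porder P le \<Longrightarrow> porder P (\<lambda>a b. le b a)"
  unfolding porder_def by blast

lemma ivl_psubset:
  assumes "porder P le" "x \<in> P" "y \<in> P" "z \<in> P" "le x z" "le z y" "z \<noteq> y"
  shows "card (ivl P le x z) < card (ivl P le x y)"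
proof (rule psubset_card_mono)
  show "finite (ivl P le x y)" using porderD(1)[OF assms(1)] unfolding ivl_def by auto
  have "ivl P le x z \<subseteq> ivl P le x y" using assms porderD(3)[OF assms(1)] unfolding ivl_def by blast
  moreover have "y \<in> ivl P le x y" using assms porderD(2,3)[OF assms(1)] unfolding ivl_def by blast
  moreover have "y \<notin> ivl P le x z" using assms porderD(4)[OF assms(1)] unfolding ivl_def by blast
  ultimately show "ivl P le x z \<subset> ivl P le x y" by blast
qed

lemma ivl_empty:
  assumes "porder P le" "x \<in> P" "le x y" "card (ivl P le x y) = 0"
  shows False
proof -
  have "finite (ivl P le x y)" using porderD(1)[OF assms(1)] unfolding ivl_def by auto
  moreover have "x \<in> ivl P le x y" using assms porderD(2)[OF assms(1)] unfolding ivl_def by auto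
  ultimately show False using assms(4) by auto
qed

lemma fuel_stable:
  assumes "porder P le" "x \<in> P"
  shows "y \<in> P \<Longrightarrow> card (ivl P le x y) \<le> k1 \<Longrightarrow> card (ivl P le x y) \<le> k2 \<Longrightarrow>
    moeb_fuel k1 P le x y = moeb_fuel k2 P le x y"
proof (induction k1 arbitrary: k2 y)
  case 0
  then show ?case using ivl_empty[OF assms] by (cases k2) auto
next
  case (Suc k1)
  show ?case
  proof (cases k2)
    case 0
    then show ?thesis using ivl_empty[OF assms] Suc.prems by auto
  next
    case (Suc k2')
    have "moeb_fuel k1 P le x z = moeb_fuel k2' P le x z" if "z \<in> {z\<in>P. le x z \<and> le z y \<and> z \<noteq> y}" for z
      using that ivl_psubset[OF assms(1,2) Suc.prems(1), of z] Suc.prems Suc.IH[of z k2'] \<open>k2 = Suc k2'\<close> by auto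
    then show ?thesis using \<open>k2 = Suc k2'\<close> by (auto intro!: sum.cong)
  qed
qed

lemma moebius_rec:
  assumes "porder P le" "x \<in> P" "y \<in> P"
  shows "moebius P le x y = (if x = y then 1 else if le x y then
      - (\<Sum>z\<in>{z\<in>P. le x z \<and> le z y \<and> z \<noteq> y}. moebius P le x z) else 0)"
proof -
  have fin: "finite P" using porderD(1)[OF assms(1)] .
  obtain k where k: "card P = Suc k" using assms(2) fin by (cases "card P") auto
  have sub: "card (ivl P le x w) \<le> card P" for w using fin unfolding ivl_def by (auto intro: card_mono)
  have "moeb_fuel k P le x z = moeb_fuel (card P) P le x z" if "z \<in> {z\<in>P. le x z \<and> le z y \<and> z \<noteq> y}" for z
    using that ivl_psubset[OF assms, of z] sub[of y] sub[of z] k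
    by (intro fuel_stable[OF assms(1,2)]) auto
  then show ?thesis unfolding moebius_def k by (auto intro!: sum.cong)
qed

lemma moebius_left:
  assumes "porder P le" "x \<in> P" "y \<in> P" "le x y"
  shows "(\<Sum>z\<in>ivl P le x y. moebius P le x z) = (if x = y then 1 else 0)"
proof (cases "x = y")
  case True
  then have "ivl P le x y = {x}" using assms porderD(2,4)[OF assms(1)] unfolding ivl_def by auto
  then show ?thesis using moebius_rec[OF assms(1,2,2)] True by simp
next
  case False
  have fin: "finite P" using porderD(1)[OF assms(1)] .
  have "ivl P le x y = insert y {z\<in>P. le x z \<and> le z y \<and> z \<noteq> y}"
    using assms porderD(2)[OF assms(1)] unfolding ivl_def by auto
  then show ?thesis using moebius_rec[OF assms(1,2,3)] False assms(4) fin by simp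
qed

lemma ivl_sub:
  assumes "porder P le" "x \<in> P" "z \<in> ivl P le x y"
  shows "ivl P le z y = {w\<in>ivl P le x y. le z w}"
proof -
  have "le x w" if "w \<in> P" "le z w" for w
    using porderD(3)[OF assms(1) assms(2), of z w] assms(3) that unfolding ivl_def by simp
  then show ?thesis using assms(3) unfolding ivl_def by auto
qed

lemma ivl_sub2:
  assumes "porder P le" "y \<in> P" "w \<in> ivl P le x y"
  shows "{z\<in>ivl P le x y. le z w} = ivl P le x w"
proof -
  have "le z y" if "z \<in> P" "le z w" for z
    using porderD(3)[OF assms(1) that(1), of w y] assms(2,3) that unfolding ivl_def by simp
  then show ?thesis using assms(3) unfolding ivl_def by auto
qed

lemma moebius_sym:
  assumes "porder P le" "x \<in> P" "y \<in> P"
  shows "moebius P le x y = moebius P (\<lambda>a b. le b a) y x"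
proof -
  let ?R = "\<lambda>x y. moebius P (\<lambda>a b. le b a) y x"
  have dual: "porder P (\<lambda>a b. le b a)" using porder_dual[OF assms(1)] .
  have fin: "finite P" using porderD(1)[OF assms(1)] .
  have right: "(\<Sum>w\<in>ivl P le z y. ?R w y) = (if z = y then 1 else 0)" if "z \<in> P" "le z y" for z
  proof -
    have "ivl P le z y = ivl P (\<lambda>a b. le b a) y z" unfolding ivl_def by auto
    then show ?thesis using moebius_left[OF dual assms(3) that(1) that(2)] by auto
  qed
  show ?thesis
  proof (cases "le x y")
    case False
    then have "x \<noteq> y" using assms porderD(2)[OF assms(1)] by metis
    then show ?thesis using moebius_rec[OF assms] moebius_rec[OF dual assms(3,2)] False by auto
  next
    case True
    have yi: "y \<in> ivl P le x y" using assms True porderD(2)[OF assms(1)] unfolding ivl_def by auto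
    have finI: "finite (ivl P le x y)" using fin unfolding ivl_def by auto
    have "moebius P le x y = (\<Sum>z\<in>ivl P le x y. if z = y then moebius P le x z else 0)"
      using yi finI by (simp add: sum.delta')
    also have "\<dots> = (\<Sum>z\<in>ivl P le x y. moebius P le x z * (if z = y then 1 else 0))"
      by (intro sum.cong) auto
    also have "\<dots> = (\<Sum>z\<in>ivl P le x y. \<Sum>w\<in>ivl P le z y. moebius P le x z * ?R w y)"
    proof (rule sum.cong[OF refl])
      fix z assume "z \<in> ivl P le x y"
      then have "z \<in> P" "le z y" unfolding ivl_def by auto
      then show "moebius P le x z * (if z = y then 1 else 0) = (\<Sum>w\<in>ivl P le z y. moebius P le x z * ?R w y)"
        using right[of z] by (simp add: sum_distrib_left[symmetric])
    qed
    also have "\<dots> = (\<Sum>z\<in>ivl P le x y. \<Sum>w\<in>{w\<in>ivl P le x y. le z w}. moebius P le x z * ?R w y)"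
    proof (rule sum.cong[OF refl])
      fix z assume "z \<in> ivl P le x y"
      then have "ivl P le z y = {w\<in>ivl P le x y. le z w}" by (rule ivl_sub[OF assms(1,2)])
      then show "(\<Sum>w\<in>ivl P le z y. moebius P le x z * ?R w y) = (\<Sum>w\<in>{w\<in>ivl P le x y. le z w}. moebius P le x z * ?R w y)" by simp
    qed
    also have "\<dots> = (\<Sum>w\<in>ivl P le x y. \<Sum>z\<in>{z\<in>ivl P le x y. le z w}. moebius P le x z * ?R w y)"
      by (rule sum.swap_restrict[OF finI finI])
    also have "\<dots> = (\<Sum>w\<in>ivl P le x y. (if x = w then 1 else 0) * ?R w y)"
    proof (rule sum.cong[OF refl])
      fix w assume w: "w \<in> ivl P le x y"
      then have "{z\<in>ivl P le x y. le z w} = ivl P le x w" by (rule ivl_sub2[OF assms(1,3)])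
      then have "(\<Sum>z\<in>{z\<in>ivl P le x y. le z w}. moebius P le x z * ?R w y) = (\<Sum>z\<in>ivl P le x w. moebius P le x z) * ?R w y"
        by (simp add: sum_distrib_right)
      also have "\<dots> = (if x = w then 1 else 0) * ?R w y"
        using moebius_left[OF assms(1,2), of w] w unfolding ivl_def by simp
      finally show "(\<Sum>z\<in>{z\<in>ivl P le x y. le z w}. moebius P le x z * ?R w y) = (if x = w then 1 else 0) * ?R w y" .
    qed
    also have "\<dots> = (\<Sum>w\<in>ivl P le x y. if w = x then ?R w y else 0)"
      by (intro sum.cong) auto
    also have "\<dots> = ?R x y"
    proof -
      have "x \<in> ivl P le x y" using assms True porderD(2)[OF assms(1)] unfolding ivl_def by auto
      then show ?thesis using sum.delta[OF finI, of x "\<lambda>w. ?R w y"] by simp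
    qed
    finally show ?thesis .
  qed
qed

lemma moebius_right:
  assumes "porder P le" "x \<in> P" "y \<in> P" "le x y"
  shows "(\<Sum>z\<in>ivl P le x y. moebius P le z y) = (if x = y then 1 else 0)"
proof -
  have dual: "porder P (\<lambda>a b. le b a)" using porder_dual[OF assms(1)] .
  have "(\<Sum>z\<in>ivl P le x y. moebius P le z y) = (\<Sum>z\<in>ivl P (\<lambda>a b. le b a) y x. moebius P (\<lambda>a b. le b a) y z)"
    by (rule sum.cong) (auto simp: ivl_def moebius_sym[OF assms(1)] assms)
  also have "\<dots> = (if x = y then 1 else 0)" using moebius_left[OF dual assms(3,2) assms(4)] by auto
  finally show ?thesis .
qed




lemma exists_bij_ext:
  fixes idx1 idx2 :: "nat \<Rightarrow> nat"
  assumes "finite S" "\<forall>i\<in>S. \<forall>j\<in>S. (idx1 i = idx1 j \<longleftrightarrow> idx2 i = idx2 j)"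
  shows "\<exists>\<beta>::nat\<Rightarrow>nat. bij \<beta> \<and> (\<forall>i\<in>S. \<beta> (idx1 i) = idx2 i)"
proof -
  define A where "A = idx1 ` S"
  define B where "B = idx2 ` S"
  define f where "f x = idx2 (inv_into S idx1 x)" for x
  have fi: "f (idx1 i) = idx2 i" if "i \<in> S" for i
  proof -
    have "inv_into S idx1 (idx1 i) \<in> S" "idx1 (inv_into S idx1 (idx1 i)) = idx1 i"
      using that by (auto intro: inv_into_into f_inv_into_f)
    then show ?thesis using assms(2) that unfolding f_def by blast
  qed
  have bf: "bij_betw f A B"
    unfolding bij_betw_def inj_on_def A_def B_def
  proof (intro conjI ballI impI)
    fix x y assume "x \<in> idx1 ` S" "y \<in> idx1 ` S" "f x = f y"
    then obtain i j where "i \<in> S" "j \<in> S" "x = idx1 i" "y = idx1 j" "f x = f y" by auto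
    then show "x = y" using fi assms(2) by metis
  next
    show "f ` idx1 ` S = idx2 ` S" using fi by (auto simp: image_image)
  qed
  have fA: "finite A" "finite B" using assms(1) unfolding A_def B_def by auto
  have iA: "infinite (UNIV - A)" and iB: "infinite (UNIV - B)"
    using Diff_infinite_finite[OF fA(1)] Diff_infinite_finite[OF fA(2)] by auto
  define h where "h = Infinite_Set.enumerate (UNIV - B) \<circ> inv_into UNIV (Infinite_Set.enumerate (UNIV - A))"
  have bh: "bij_betw h (UNIV - A) (UNIV - B)"
    unfolding h_def using bij_betw_trans[OF bij_betw_inv_into[OF bij_enumerate[OF iA]] bij_enumerate[OF iB]] .
  define g where "g x = (if x \<in> A then f x else h x)" for x
  have "bij_betw g A B" using bf by (rule bij_betw_cong[THEN iffD1, rotated]) (simp add: g_def)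
  moreover have "bij_betw g (UNIV - A) (UNIV - B)" using bh by (rule bij_betw_cong[THEN iffD1, rotated]) (simp add: g_def)
  ultimately have "bij_betw g (A \<union> (UNIV - A)) (B \<union> (UNIV - B))" by (rule bij_betw_combine) auto
  then have "bij g" by simp
  moreover have "\<forall>i\<in>S. g (idx1 i) = idx2 i" using fi unfolding g_def A_def by auto
  ultimately show ?thesis by blast
qed

lemma hom_one: "unital_alg_hom f \<Longrightarrow> f 1 = 1" unfolding unital_alg_hom_def by auto

lemma exch_kernel:
  assumes ex: "exch_system \<phi> \<phi>t \<iota>" and "finite S"
    and ker: "\<forall>i\<in>S. \<forall>j\<in>S. (idx1 i = idx1 j \<longleftrightarrow> idx2 i = idx2 j)"
    and one: "\<forall>i<m. i \<notin> S \<longrightarrow> Z i = 1"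
  shows "\<phi>t (oprod m (\<lambda>j. \<iota> (idx1 j) (Z j))) = \<phi>t (oprod m (\<lambda>j. \<iota> (idx2 j) (Z j)))"
proof -
  obtain \<beta> :: "nat \<Rightarrow> nat" where b: "bij \<beta>" "\<forall>i\<in>S. \<beta> (idx1 i) = idx2 i"
    using exists_bij_ext[OF assms(2) ker] by blast
  have "\<phi>t (oprod m (\<lambda>j. \<iota> (idx1 j) (Z j))) = \<phi>t (oprod m (\<lambda>j. \<iota> (\<beta> (idx1 j)) (Z j)))"
    using ex b(1) unfolding exch_system_def by blast
  also have "oprod m (\<lambda>j. \<iota> (\<beta> (idx1 j)) (Z j)) = oprod m (\<lambda>j. \<iota> (idx2 j) (Z j))"
  proof (rule oprod_cong)
    fix i assume "i < m"
    show "\<iota> (\<beta> (idx1 i)) (Z i) = \<iota> (idx2 i) (Z i)"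
    proof (cases "i \<in> S")
      case True then show ?thesis using b by simp
    next
      case False
      then have "Z i = 1" using one \<open>i < m\<close> by auto
      moreover have "\<forall>k. \<iota> k 1 = 1" using ex unfolding exch_system_def unital_alg_hom_def by blast
      ultimately show ?thesis by simp
    qed
  qed
  finally show ?thesis .
qed

section \<open>Partitions\<close>

lemma Pi_setD: "\<sigma> \<in> Pi_set m \<Longrightarrow> partition_on {0..<m} \<sigma>" unfolding Pi_set_def by simp

lemma finite_Pi_set: "finite (Pi_set m)"
  unfolding Pi_set_def by (rule finitely_many_partition_on) simp

lemma part_block_unique:
  assumes "\<sigma> \<in> Pi_set m" "B \<in> \<sigma>" "C \<in> \<sigma>" "i \<in> B" "i \<in> C"
  shows "B = C"
  using disjointD[OF partition_onD2[OF Pi_setD[OF assms(1)]] assms(2,3)] assms(4,5) by blast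

lemma part_block_exists:
  assumes "\<sigma> \<in> Pi_set m" "i < m"
  shows "\<exists>B\<in>\<sigma>. i \<in> B"
  using partition_onD1[OF Pi_setD[OF assms(1)]] assms(2) by auto

lemma block_sub: "\<sigma> \<in> Pi_set m \<Longrightarrow> B \<in> \<sigma> \<Longrightarrow> B \<subseteq> {0..<m}"
  using partition_onD1[OF Pi_setD] by blast

lemma block_ne: "\<sigma> \<in> Pi_set m \<Longrightarrow> B \<in> \<sigma> \<Longrightarrow> B \<noteq> {}"
  using partition_onD3[OF Pi_setD] by blast

lemma the_block:
  assumes "\<sigma> \<in> Pi_set m" "i < m"
  shows "(THE B. B \<in> \<sigma> \<and> i \<in> B) \<in> \<sigma>" "i \<in> (THE B. B \<in> \<sigma> \<and> i \<in> B)"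
proof -
  obtain B where B: "B \<in> \<sigma>" "i \<in> B" using part_block_exists[OF assms] by blast
  have "(THE B. B \<in> \<sigma> \<and> i \<in> B) = B"
    using B part_block_unique[OF assms(1)] by (intro the_equality) auto
  then show "(THE B. B \<in> \<sigma> \<and> i \<in> B) \<in> \<sigma>" "i \<in> (THE B. B \<in> \<sigma> \<and> i \<in> B)" using B by auto
qed

lemma part_index_eq:
  assumes "\<sigma> \<in> Pi_set m" "i < m" "j < m"
  shows "part_index \<sigma> i = part_index \<sigma> j \<longleftrightarrow> (\<exists>B\<in>\<sigma>. i \<in> B \<and> j \<in> B)"
proof -
  define Bi where "Bi = (THE B. B \<in> \<sigma> \<and> i \<in> B)"
  define Bj where "Bj = (THE B. B \<in> \<sigma> \<and> j \<in> B)"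
  have bi: "Bi \<in> \<sigma>" "i \<in> Bi" using the_block[OF assms(1,2)] unfolding Bi_def by auto
  have bj: "Bj \<in> \<sigma>" "j \<in> Bj" using the_block[OF assms(1,3)] unfolding Bj_def by auto
  have fi: "finite Bi" "Bi \<noteq> {}" "finite Bj" "Bj \<noteq> {}"
    using block_sub[OF assms(1)] bi bj finite_subset by (auto intro: finite_subset[of _ "{0..<m}"])
  have "part_index \<sigma> i = Min Bi" "part_index \<sigma> j = Min Bj" unfolding part_index_def Bi_def Bj_def by auto
  moreover have "Min Bi \<in> Bi" "Min Bj \<in> Bj" using fi by auto
  ultimately show ?thesis using part_block_unique[OF assms(1)] bi bj by metis
qed

lemma porder_Pi: "porder (Pi_set m) refines"
  unfolding porder_def
proof (intro conjI ballI impI)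
  show "finite (Pi_set m)" by (rule finite_Pi_set)
  show "refines x x" for x unfolding refines_def by blast
  show "refines x z" if "refines x y" "refines y z" for x y z
    using that unfolding refines_def by (meson order_trans)
  show "x = y" if xy: "x \<in> Pi_set m" "y \<in> Pi_set m" "refines x y" "refines y x" for x y
  proof -
    have sub: "a \<subseteq> b" if ab: "a \<in> Pi_set m" "b \<in> Pi_set m" "refines a b" "refines b a" for a b
    proof
      fix B assume "B \<in> a"
      then obtain C where C: "C \<in> b" "B \<subseteq> C" using ab(3) unfolding refines_def by blast
      then obtain B' where B': "B' \<in> a" "C \<subseteq> B'" using ab(4) unfolding refines_def by blast
      obtain i where "i \<in> B" using block_ne[OF ab(1) \<open>B \<in> a\<close>] by blast
      then have "B = B'" using part_block_unique[OF ab(1) \<open>B \<in> a\<close> B'(1)] C B' by blast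
      then have "C = B" using C B' by (metis subset_antisym)
      then show "B \<in> b" using C by simp
    qed
    show ?thesis using sub[OF xy] sub[OF xy(2,1,4,3)] by blast
  qed
qed




definition sp :: "nat \<Rightarrow> nat set set \<Rightarrow> nat set set" where
  "sp p \<sigma> = insert {p} ((\<lambda>B. B - {p}) ` \<sigma> - {{}})"

lemma sp_Pi:
  assumes "\<sigma> \<in> Pi_set m" "p < m"
  shows "sp p \<sigma> \<in> Pi_set m"
  unfolding Pi_set_def mem_Collect_eq
proof (rule partition_onI)
  show "\<Union>(sp p \<sigma>) = {0..<m}"
    using partition_onD1[OF Pi_setD[OF assms(1)]] assms(2) unfolding sp_def by auto
  show "{} \<notin> sp p \<sigma>" unfolding sp_def by auto
  fix B C assume BC: "B \<in> sp p \<sigma>" "C \<in> sp p \<sigma>" "B \<noteq> C"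
  show "disjnt B C"
  proof (cases "B = {p} \<or> C = {p}")
    case True then show ?thesis using BC unfolding sp_def disjnt_def by auto
  next
    case False
    then obtain B0 C0 where "B0 \<in> \<sigma>" "C0 \<in> \<sigma>" "B = B0 - {p}" "C = C0 - {p}"
      using BC unfolding sp_def by auto
    moreover have "B0 \<noteq> C0" using BC calculation by auto
    ultimately show ?thesis
      using disjointD[OF partition_onD2[OF Pi_setD[OF assms(1)]]] unfolding disjnt_def by blast
  qed
qed

lemma sp_refines:
  assumes "\<sigma> \<in> Pi_set m" "p < m"
  shows "refines (sp p \<sigma>) \<sigma>"
  unfolding refines_def sp_def using part_block_exists[OF assms] by auto

lemma sp_refines_iff:
  assumes "\<sigma> \<in> Pi_set m" "p < m" "z \<in> Pi_set m" "{p} \<in> z"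
  shows "refines z (sp p \<sigma>) \<longleftrightarrow> refines z \<sigma>"
proof
  assume "refines z (sp p \<sigma>)"
  then show "refines z \<sigma>" using sp_refines[OF assms(1,2)] unfolding refines_def by (meson order_trans)
next
  assume r: "refines z \<sigma>"
  show "refines z (sp p \<sigma>)" unfolding refines_def
  proof
    fix B assume B: "B \<in> z"
    show "\<exists>C\<in>sp p \<sigma>. B \<subseteq> C"
    proof (cases "B = {p}")
      case True then show ?thesis unfolding sp_def by auto
    next
      case False
      then have "p \<notin> B" using part_block_unique[OF assms(3) B assms(4)] by auto
      obtain C where C: "C \<in> \<sigma>" "B \<subseteq> C" using r B unfolding refines_def by blast
      have "B \<noteq> {}" using block_ne[OF assms(3) B] .
      then have "C - {p} \<in> sp p \<sigma>" "B \<subseteq> C - {p}" using C \<open>p \<notin> B\<close> unfolding sp_def by auto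
      then show ?thesis by blast
    qed
  qed
qed

lemma sp_kernel:
  assumes "\<sigma> \<in> Pi_set m" "i \<noteq> p" "j \<noteq> p"
  shows "(\<exists>B\<in>sp p \<sigma>. i \<in> B \<and> j \<in> B) \<longleftrightarrow> (\<exists>B\<in>\<sigma>. i \<in> B \<and> j \<in> B)"
proof
  assume "\<exists>B\<in>sp p \<sigma>. i \<in> B \<and> j \<in> B"
  then obtain B where B: "B \<in> sp p \<sigma>" "i \<in> B" "j \<in> B" by blast
  then have "B \<noteq> {p}" using assms(2) by blast
  then obtain B0 where "B0 \<in> \<sigma>" "B = B0 - {p}" using B(1) unfolding sp_def by blast
  then show "\<exists>B\<in>\<sigma>. i \<in> B \<and> j \<in> B" using B by blast
next
  assume "\<exists>B\<in>\<sigma>. i \<in> B \<and> j \<in> B"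
  then obtain B where B: "B \<in> \<sigma>" "i \<in> B" "j \<in> B" by blast
  then have "B - {p} \<in> sp p \<sigma>" using assms(2) unfolding sp_def by blast
  moreover have "i \<in> B - {p}" "j \<in> B - {p}" using B(2,3) assms(2,3) by simp_all
  ultimately show "\<exists>B\<in>sp p \<sigma>. i \<in> B \<and> j \<in> B" by (intro bexI[of _ "B - {p}"]) simp_all
qed

lemma phi_part_sp:
  assumes ex: "exch_system \<phi> \<phi>t \<iota>" and "\<sigma> \<in> Pi_set m" "p < m" "Z p = 1"
  shows "phi_part \<phi>t \<iota> m (sp p \<sigma>) Z = phi_part \<phi>t \<iota> m \<sigma> Z"
  unfolding phi_part_def
proof (rule exch_kernel[OF ex, of "{0..<m} - {p}"])
  show "finite ({0..<m} - {p})" by simp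
  show "\<forall>i<m. i \<notin> {0..<m} - {p} \<longrightarrow> Z i = 1" using assms(4) by auto
  have s: "sp p \<sigma> \<in> Pi_set m" using sp_Pi[OF assms(2,3)] .
  show "\<forall>i\<in>{0..<m} - {p}. \<forall>j\<in>{0..<m} - {p}. (part_index (sp p \<sigma>) i = part_index (sp p \<sigma>) j) = (part_index \<sigma> i = part_index \<sigma> j)"
    using part_index_eq[OF s] part_index_eq[OF assms(2)] sp_kernel[OF assms(2)] by auto
qed




lemma vanish:
  assumes ex: "exch_system \<phi> \<phi>t \<iota>" and piP: "\<pi> \<in> Pi_set m"
    and nosing: "\<forall>B\<in>\<pi>. \<not> (\<exists>x. B = {x})" and p: "p < m" and Zp: "Z p = 1"
  shows "(\<Sum>\<sigma>\<in>{\<sigma>\<in>Pi_set m. refines \<sigma> \<pi>}. phi_part \<phi>t \<iota> m \<sigma> Z * of_int (mu_Pi m \<sigma> \<pi>)) = 0"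
proof -
  let ?P = "Pi_set m"
  define Q0 where "Q0 = {\<sigma>\<in>?P. refines \<sigma> \<pi>}"
  define T where "T = {b\<in>?P. {p} \<in> b \<and> refines b \<pi>}"
  define M where "M \<sigma> = (of_int (mu_Pi m \<sigma> \<pi>) :: complex)" for \<sigma>
  define g where "g b = (\<Sum>\<sigma>\<in>{\<sigma>\<in>Q0. sp p \<sigma> = b}. M \<sigma>)" for b
  have po: "porder ?P refines" by (rule porder_Pi)
  have finQ0: "finite Q0" and finT: "finite T" unfolding Q0_def T_def using finite_Pi_set by auto
  have spT: "sp p \<sigma> \<in> T" if "\<sigma> \<in> Q0" for \<sigma>
  proof -
    have "\<sigma> \<in> ?P" "refines \<sigma> \<pi>" using that unfolding Q0_def by auto
    moreover have "refines (sp p \<sigma>) \<sigma>" using sp_refines[OF \<open>\<sigma> \<in> ?P\<close> p] .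
    ultimately have "refines (sp p \<sigma>) \<pi>" unfolding refines_def by (meson order_trans)
    moreover have "sp p \<sigma> \<in> ?P" using sp_Pi[OF \<open>\<sigma> \<in> ?P\<close> p] .
    ultimately show ?thesis unfolding T_def sp_def by auto
  qed
  have key: "(\<Sum>b\<in>{b\<in>T. refines z b}. g b) = 0" if zT: "z \<in> T" for z
  proof -
    have zP: "z \<in> ?P" "{p} \<in> z" "refines z \<pi>" using zT unfolding T_def by auto
    define S where "S = {\<sigma>\<in>Q0. refines z (sp p \<sigma>)}"
    have "(\<Sum>b\<in>{b\<in>T. refines z b}. g b) = (\<Sum>b\<in>{b\<in>T. refines z b}. \<Sum>\<sigma>\<in>{\<sigma>\<in>S. sp p \<sigma> = b}. M \<sigma>)"
    proof (rule sum.cong[OF refl])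
      fix b assume "b \<in> {b\<in>T. refines z b}"
      then have "{\<sigma>\<in>Q0. sp p \<sigma> = b} = {\<sigma>\<in>S. sp p \<sigma> = b}" unfolding S_def by auto
      then show "g b = (\<Sum>\<sigma>\<in>{\<sigma>\<in>S. sp p \<sigma> = b}. M \<sigma>)" unfolding g_def by simp
    qed
    also have "\<dots> = (\<Sum>\<sigma>\<in>S. M \<sigma>)"
      by (rule sum.group) (use finQ0 finT spT in \<open>auto simp: S_def\<close>)
    also have "S = ivl ?P refines z \<pi>"
    proof -
      have "refines z (sp p \<sigma>) \<longleftrightarrow> refines z \<sigma>" if "\<sigma> \<in> ?P" for \<sigma>
        using sp_refines_iff[OF that p zP(1,2)] .
      then show ?thesis unfolding S_def Q0_def ivl_def by auto
    qed
    also have "(\<Sum>\<sigma>\<in>ivl ?P refines z \<pi>. M \<sigma>) = of_int (\<Sum>\<sigma>\<in>ivl ?P refines z \<pi>. moebius ?P refines \<sigma> \<pi>)"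
      unfolding M_def mu_Pi_def by simp
    also have "\<dots> = of_int (if z = \<pi> then 1 else 0)"
      using moebius_right[OF po zP(1) piP zP(3)] by simp
    finally show ?thesis using zP(2) nosing by auto
  qed
  have gz: "\<forall>b. card {b'\<in>T. refines b b'} = k \<longrightarrow> b \<in> T \<longrightarrow> g b = 0" for k
  proof (induction k rule: less_induct)
    case (less k)
    show ?case
    proof (intro allI impI)
      fix b assume k: "card {b'\<in>T. refines b b'} = k" and bT: "b \<in> T"
      define U where "U = {b'\<in>T. refines b b'}"
      have finU: "finite U" using finT unfolding U_def by auto
      have bU: "b \<in> U" using bT unfolding U_def refines_def by auto
      have "0 = (\<Sum>b'\<in>U. g b')" using key[OF bT] unfolding U_def by simp
      also have "\<dots> = g b + (\<Sum>b'\<in>U - {b}. g b')" using sum.remove[OF finU bU] .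
      also have "(\<Sum>b'\<in>U - {b}. g b') = 0"
      proof (rule sum.neutral, rule ballI)
        fix b' assume b': "b' \<in> U - {b}"
        have b'T: "b' \<in> T" and bb': "refines b b'" "b' \<noteq> b" using b' unfolding U_def by auto
        have "{b''\<in>T. refines b' b''} \<subset> U"
        proof
          show "{b''\<in>T. refines b' b''} \<subseteq> U" unfolding U_def using bb'(1) unfolding refines_def
            by (auto intro: order_trans) (meson order_trans)
          have "b \<notin> {b''\<in>T. refines b' b''}"
            using porderD(4)[OF po, of b b'] bT b'T bb' unfolding T_def by auto
          then show "{b''\<in>T. refines b' b''} \<noteq> U" using bU by blast
        qed
        then have "card {b''\<in>T. refines b' b''} < k" using psubset_card_mono[OF finU] k unfolding U_def by auto
        then show "g b' = 0" using less.IH b'T by blast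
      qed
      finally show "g b = 0" by simp
    qed
  qed
  have "(\<Sum>\<sigma>\<in>Q0. phi_part \<phi>t \<iota> m \<sigma> Z * M \<sigma>) = (\<Sum>\<sigma>\<in>Q0. phi_part \<phi>t \<iota> m (sp p \<sigma>) Z * M \<sigma>)"
    by (rule sum.cong[OF refl]) (use phi_part_sp[OF ex] p Zp in \<open>auto simp: Q0_def\<close>)
  also have "\<dots> = (\<Sum>b\<in>T. \<Sum>\<sigma>\<in>{\<sigma>\<in>Q0. sp p \<sigma> = b}. phi_part \<phi>t \<iota> m (sp p \<sigma>) Z * M \<sigma>)"
    by (rule sum.group[symmetric]) (use finQ0 finT spT in auto)
  also have "\<dots> = (\<Sum>b\<in>T. phi_part \<phi>t \<iota> m b Z * g b)"
    unfolding g_def by (rule sum.cong[OF refl]) (simp add: sum_distrib_left)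
  also have "\<dots> = 0" using gz by (simp)
  finally show ?thesis unfolding Q0_def M_def .
qed




definition lin :: "('a::complex_algebra_1 \<Rightarrow> 'b::complex_algebra_1) \<Rightarrow> bool" where
  "lin f \<longleftrightarrow> (\<forall>x y. f (x + y) = f x + f y) \<and> (\<forall>c x. f (c *\<^sub>C x) = c *\<^sub>C f x)"

lemma lin_zero: "lin f \<Longrightarrow> f 0 = 0"
  unfolding lin_def by (metis scaleC_zero_left)

lemma lin_sum: "lin f \<Longrightarrow> f (\<Sum>c\<in>C. \<gamma> c *\<^sub>C x c) = (\<Sum>c\<in>C. \<gamma> c *\<^sub>C f (x c))"
proof (induction C rule: infinite_finite_induct)
  case (infinite A) then show ?case by (simp add: lin_zero)
next
  case empty then show ?case by (simp add: lin_zero)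
next
  case (insert a A) then show ?case unfolding lin_def by simp
qed

lemma ncps_zero: "ncps \<phi> \<Longrightarrow> \<phi> 0 = 0"
  unfolding ncps_def by (metis mult_zero_left scaleC_zero_left)

lemma ncps_sum: "ncps \<phi> \<Longrightarrow> \<phi> (\<Sum>c\<in>C. a c *\<^sub>C x c) = (\<Sum>c\<in>C. a c * \<phi> (x c))"
proof (induction C rule: infinite_finite_induct)
  case (infinite A) then show ?case by (simp add: ncps_zero)
next
  case empty then show ?case by (simp add: ncps_zero)
next
  case (insert a A) then show ?case unfolding ncps_def by simp
qed

lemma expand_general:
  fixes C :: "nat set"
  assumes Y: "\<And>i. Y i = (\<Sum>c\<in>C. \<gamma> i c *\<^sub>C W c)" and C: "finite C"
    and L: "\<And>i. lin (L i)" and ph: "ncps \<phi>t"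
  shows "\<phi>t (oprod m (\<lambda>i. L i (Y i))) =
     (\<Sum>j\<in>{0..<m} \<rightarrow>\<^sub>E C. (\<Prod>i<m. \<gamma> i (j i)) * \<phi>t (oprod m (\<lambda>i. L i (W (j i)))))"
proof -
  have "oprod m (\<lambda>i. L i (Y i)) = oprod m (\<lambda>i. \<Sum>c\<in>C. \<gamma> i c *\<^sub>C L i (W c))"
    unfolding Y by (rule oprod_cong) (rule lin_sum[OF L])
  also have "\<dots> = (\<Sum>j\<in>{0..<m} \<rightarrow>\<^sub>E C. (\<Prod>i<m. \<gamma> i (j i)) *\<^sub>C oprod m (\<lambda>i. L i (W (j i))))"
    by (rule oprod_expand[OF C])
  finally show ?thesis using ncps_sum[OF ph] by simp
qed

lemma split_sum:
  fixes F G :: "(nat \<Rightarrow> nat) \<Rightarrow> complex"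
  assumes "\<And>j. j \<in> {0..<m} \<rightarrow>\<^sub>E {..n} \<Longrightarrow> (\<exists>i<m. j i = n) \<Longrightarrow> F j = 0"
    and "\<And>j. j \<in> {0..<m} \<rightarrow>\<^sub>E {0..<n} \<Longrightarrow> F j = G j"
  shows "(\<Sum>j\<in>{0..<m} \<rightarrow>\<^sub>E {..n}. F j) = (\<Sum>j\<in>{0..<m} \<rightarrow>\<^sub>E {0..<n}. G j)"
proof -
  have sub: "{0..<m} \<rightarrow>\<^sub>E {0..<n} \<subseteq> {0..<m} \<rightarrow>\<^sub>E {..n}" by (rule PiE_mono) auto
  have "(\<Sum>j\<in>{0..<m} \<rightarrow>\<^sub>E {..n}. F j) = (\<Sum>j\<in>{0..<m} \<rightarrow>\<^sub>E {0..<n}. F j)"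
  proof (rule sum.mono_neutral_right[OF _ sub])
    show "finite ({0..<m} \<rightarrow>\<^sub>E {..n})" by (rule finite_PiE) auto
    show "\<forall>j\<in>({0..<m} \<rightarrow>\<^sub>E {..n}) - ({0..<m} \<rightarrow>\<^sub>E {0..<n}). F j = 0"
    proof
      fix j assume j: "j \<in> ({0..<m} \<rightarrow>\<^sub>E {..n}) - ({0..<m} \<rightarrow>\<^sub>E {0..<n})"
      have "\<exists>i<m. j i = n"
      proof (rule ccontr)
        assume "\<not> (\<exists>i<m. j i = n)"
        then have "j \<in> {0..<m} \<rightarrow>\<^sub>E {0..<n}" using j by (auto simp: PiE_def Pi_def)
        then show False using j by blast
      qed
      then show "F j = 0" using assms(1) j by blast
    qed
  qed
  also have "\<dots> = (\<Sum>j\<in>{0..<m} \<rightarrow>\<^sub>E {0..<n}. G j)" using assms(2) by (rule sum.cong[OF refl])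
  finally show ?thesis .
qed

lemma prim_sum_zero:
  assumes "primitive_root m \<omega>" "m \<ge> 2"
  shows "(\<Sum>k=1..m. \<omega> ^ k) = 0"
proof -
  have w1: "\<omega> \<noteq> 1" 
  proof -
    have "0 < (1::nat)" "1 < m" using assms(2) by auto
    then have "\<omega> ^ 1 \<noteq> 1" using assms(1) unfolding primitive_root_def by blast
    then show ?thesis by simp
  qed
  have gs: "(\<omega> - 1) * (\<Sum>k=1..n. \<omega> ^ k) = \<omega> ^ (n + 1) - \<omega>" for n
    by (induction n) (auto simp: algebra_simps)
  have "(\<omega> - 1) * (\<Sum>k=1..m. \<omega> ^ k) = \<omega> * (\<omega> ^ m - 1)" using gs[of m] by (simp add: algebra_simps)
  also have "\<dots> = 0" using assms(1) unfolding primitive_root_def by simp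
  finally show ?thesis using w1 by simp
qed

lemma exch_hom: "exch_system \<phi> \<phi>t \<iota> \<Longrightarrow> unital_alg_hom (\<iota> k)"
  unfolding exch_system_def by blast

lemma lin_iota: assumes "exch_system \<phi> \<phi>t \<iota>" shows "lin (\<iota> k)"
proof -
  have "unital_alg_hom (\<iota> k)" by (rule exch_hom[OF assms])
  then show ?thesis unfolding unital_alg_hom_def lin_def by simp
qed

lemma lin_omega: assumes "exch_system \<phi> \<phi>t \<iota>" shows "lin (omega_lift \<iota> m \<omega>)"
proof -
  have l: "lin (\<iota> k)" for k using lin_iota[OF assms] .
  show ?thesis unfolding lin_def omega_lift_def
  proof (intro conjI allI)
    fix x y
    show "(\<Sum>k = 1..m. \<omega> ^ k *\<^sub>C \<iota> k (x + y)) = (\<Sum>k = 1..m. \<omega> ^ k *\<^sub>C \<iota> k x) + (\<Sum>k = 1..m. \<omega> ^ k *\<^sub>C \<iota> k y)"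
      using l unfolding lin_def by (simp add: scaleC_add_right sum.distrib)
  next
    fix c x
    show "(\<Sum>k = 1..m. \<omega> ^ k *\<^sub>C \<iota> k (c *\<^sub>C x)) = c *\<^sub>C (\<Sum>k = 1..m. \<omega> ^ k *\<^sub>C \<iota> k x)"
      using l unfolding lin_def by (simp add: scaleC_sum_right scaleC_scaleC mult.commute)
  qed
qed

theorem proposition3p1:
  fixes \<phi> :: "'a::complex_algebra_1 \<Rightarrow> complex"
    and \<phi>t :: "'u::complex_algebra_1 \<Rightarrow> complex"
    and \<iota> :: "nat \<Rightarrow> 'a \<Rightarrow> 'u"
    and X :: "nat \<Rightarrow> 'a" and \<alpha> :: "nat \<Rightarrow> nat \<Rightarrow> complex" and \<beta> :: "nat \<Rightarrow> complex"
    and n m :: nat and \<omega> :: complex and Y :: "nat \<Rightarrow> 'a"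
  assumes "exch_system \<phi> \<phi>t \<iota>"
    and "\<And>i. Y i = (\<Sum>j<n. \<alpha> i j *\<^sub>C X j) + \<beta> i *\<^sub>C 1"
    and "m \<ge> 2"
  shows "(primitive_root m \<omega> \<longrightarrow>
            ncK \<phi>t \<iota> m \<omega> Y =
            (\<Sum>j\<in>{0..<m} \<rightarrow>\<^sub>E {0..<n}. (\<Prod>i<m. \<alpha> i (j i)) * ncK \<phi>t \<iota> m \<omega> (\<lambda>i. X (j i))))
         \<and> (\<forall>\<pi>\<in>Pi_set m. (\<forall>B\<in>\<pi>. \<not> (\<exists>x. B = {x})) \<longrightarrow>
            ncKpi \<phi>t \<iota> m \<pi> Y =
            (\<Sum>j\<in>{0..<m} \<rightarrow>\<^sub>E {0..<n}. (\<Prod>i<m. \<alpha> i (j i)) * ncKpi \<phi>t \<iota> m \<pi> (\<lambda>i. X (j i))))"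
proof -
  note ex = assms(1)
  have ph: "ncps \<phi>t" using ex unfolding exch_system_def by (elim conjE)
  define \<gamma> where "\<gamma> i c = (if c < n then \<alpha> i c else \<beta> i)" for i c
  define W where "W c = (if c < n then X c else 1)" for c
  have Y: "Y i = (\<Sum>c\<in>{..n}. \<gamma> i c *\<^sub>C W c)" for i
  proof -
    have "{..n} = insert n {..<n}" by auto
    then have "(\<Sum>c\<in>{..n}. \<gamma> i c *\<^sub>C W c) = \<beta> i *\<^sub>C 1 + (\<Sum>c<n. \<alpha> i c *\<^sub>C X c)"
      by (simp add: \<gamma>_def W_def)
    then show ?thesis using assms(2)[of i] by (simp add: add.commute)
  qed
  have gam: "(\<Prod>i<m. \<gamma> i (j i)) = (\<Prod>i<m. \<alpha> i (j i))" if "j \<in> {0..<m} \<rightarrow>\<^sub>E {0..<n}" for j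
    using that by (intro prod.cong refl) (auto simp: \<gamma>_def PiE_def Pi_def)
  have WX: "W (j i) = X (j i)" if "j \<in> {0..<m} \<rightarrow>\<^sub>E {0..<n}" "i < m" for j i
    using that by (auto simp: W_def PiE_def Pi_def)
  have W1: "W n = 1" by (simp add: W_def)
  show ?thesis
  proof (intro conjI impI ballI)
    assume prim: "primitive_root m \<omega>"
    have o1: "omega_lift \<iota> m \<omega> 1 = 0"
    proof -
      have "\<forall>k. \<iota> k 1 = 1" using exch_hom[OF ex] unfolding unital_alg_hom_def by blast
      then have "omega_lift \<iota> m \<omega> 1 = (\<Sum>k=1..m. \<omega> ^ k) *\<^sub>C 1" unfolding omega_lift_def by (simp add: scaleC_sum_left)
      then show ?thesis using prim_sum_zero[OF prim assms(3)] by simp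
    qed
    have "ncK \<phi>t \<iota> m \<omega> Y = (1 / of_nat m) *
        (\<Sum>j\<in>{0..<m} \<rightarrow>\<^sub>E {..n}. (\<Prod>i<m. \<gamma> i (j i)) * \<phi>t (oprod m (\<lambda>i. omega_lift \<iota> m \<omega> (W (j i)))))"
      unfolding ncK_def using expand_general[OF Y _ lin_omega[OF ex, of m \<omega>] ph] by simp
    also have "\<dots> = (\<Sum>j\<in>{0..<m} \<rightarrow>\<^sub>E {..n}. (\<Prod>i<m. \<gamma> i (j i)) * ncK \<phi>t \<iota> m \<omega> (\<lambda>i. W (j i)))"
      unfolding ncK_def by (simp add: sum_distrib_left mult_ac)
    also have "\<dots> = (\<Sum>j\<in>{0..<m} \<rightarrow>\<^sub>E {0..<n}. (\<Prod>i<m. \<alpha> i (j i)) * ncK \<phi>t \<iota> m \<omega> (\<lambda>i. X (j i)))"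
    proof (rule split_sum)
      fix j assume "\<exists>i<m. j i = n"
      then obtain i where "i < m" "j i = n" by blast
      then have "oprod m (\<lambda>i. omega_lift \<iota> m \<omega> (W (j i))) = 0"
        by (intro oprod_zero[of i]) (auto simp: W1 o1)
      then show "(\<Prod>i<m. \<gamma> i (j i)) * ncK \<phi>t \<iota> m \<omega> (\<lambda>i. W (j i)) = 0"
        unfolding ncK_def by (simp add: ncps_zero[OF ph])
    next
      fix j assume j: "j \<in> {0..<m} \<rightarrow>\<^sub>E {0..<n}"
      have "oprod m (\<lambda>i. omega_lift \<iota> m \<omega> (W (j i))) = oprod m (\<lambda>i. omega_lift \<iota> m \<omega> (X (j i)))"
        by (rule oprod_cong) (simp add: WX[OF j])
      then show "(\<Prod>i<m. \<gamma> i (j i)) * ncK \<phi>t \<iota> m \<omega> (\<lambda>i. W (j i)) = (\<Prod>i<m. \<alpha> i (j i)) * ncK \<phi>t \<iota> m \<omega> (\<lambda>i. X (j i))"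
        unfolding ncK_def gam[OF j] by simp
    qed
    finally show "ncK \<phi>t \<iota> m \<omega> Y = (\<Sum>j\<in>{0..<m} \<rightarrow>\<^sub>E {0..<n}. (\<Prod>i<m. \<alpha> i (j i)) * ncK \<phi>t \<iota> m \<omega> (\<lambda>i. X (j i)))" .
  next
    fix \<pi> assume piP: "\<pi> \<in> Pi_set m" and nosing: "\<forall>B\<in>\<pi>. \<not> (\<exists>x. B = {x})"
    define Q where "Q = {\<sigma>\<in>Pi_set m. refines \<sigma> \<pi>}"
    define M where "M \<sigma> = (of_int (mu_Pi m \<sigma> \<pi>) :: complex)" for \<sigma>
    have pp: "phi_part \<phi>t \<iota> m \<sigma> Y = (\<Sum>j\<in>{0..<m} \<rightarrow>\<^sub>E {..n}. (\<Prod>i<m. \<gamma> i (j i)) * phi_part \<phi>t \<iota> m \<sigma> (\<lambda>i. W (j i)))" for \<sigma>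
      unfolding phi_part_def by (rule expand_general[OF Y _ lin_iota[OF ex] ph]) simp
    have "ncKpi \<phi>t \<iota> m \<pi> Y = (\<Sum>\<sigma>\<in>Q. \<Sum>j\<in>{0..<m} \<rightarrow>\<^sub>E {..n}. (\<Prod>i<m. \<gamma> i (j i)) * (phi_part \<phi>t \<iota> m \<sigma> (\<lambda>i. W (j i)) * M \<sigma>))"
      unfolding ncKpi_def Q_def M_def pp by (simp add: sum_distrib_left sum_distrib_right mult_ac)
    also have "\<dots> = (\<Sum>j\<in>{0..<m} \<rightarrow>\<^sub>E {..n}. (\<Prod>i<m. \<gamma> i (j i)) * ncKpi \<phi>t \<iota> m \<pi> (\<lambda>i. W (j i)))"
      unfolding ncKpi_def Q_def M_def by (subst sum.swap) (simp add: sum_distrib_left)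
    also have "\<dots> = (\<Sum>j\<in>{0..<m} \<rightarrow>\<^sub>E {0..<n}. (\<Prod>i<m. \<alpha> i (j i)) * ncKpi \<phi>t \<iota> m \<pi> (\<lambda>i. X (j i)))"
    proof (rule split_sum)
      fix j assume "\<exists>i<m. j i = n"
      then obtain p where p: "p < m" "j p = n" by blast
      have "ncKpi \<phi>t \<iota> m \<pi> (\<lambda>i. W (j i)) = 0"
        unfolding ncKpi_def by (rule vanish[OF ex piP nosing p(1)]) (simp add: p(2) W1)
      then show "(\<Prod>i<m. \<gamma> i (j i)) * ncKpi \<phi>t \<iota> m \<pi> (\<lambda>i. W (j i)) = 0" by simp
    next
      fix j assume j: "j \<in> {0..<m} \<rightarrow>\<^sub>E {0..<n}"
      have "phi_part \<phi>t \<iota> m \<sigma> (\<lambda>i. W (j i)) = phi_part \<phi>t \<iota> m \<sigma> (\<lambda>i. X (j i))" for \<sigma>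
        unfolding phi_part_def by (rule arg_cong[where f=\<phi>t], rule oprod_cong) (simp add: WX[OF j])
      then show "(\<Prod>i<m. \<gamma> i (j i)) * ncKpi \<phi>t \<iota> m \<pi> (\<lambda>i. W (j i)) = (\<Prod>i<m. \<alpha> i (j i)) * ncKpi \<phi>t \<iota> m \<pi> (\<lambda>i. X (j i))"
        unfolding ncKpi_def gam[OF j] by simp
    qed
    finally show "ncKpi \<phi>t \<iota> m \<pi> Y = (\<Sum>j\<in>{0..<m} \<rightarrow>\<^sub>E {0..<n}. (\<Prod>i<m. \<alpha> i (j i)) * ncKpi \<phi>t \<iota> m \<pi> (\<lambda>i. X (j i)))" .
  qed
qed


end
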